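(* Let $X$ be a Banach space, let $A:\mathrm{D}(A)\subseteq X\to X$ be a sectorial operator (with constants $a\in\mathbb R$, $\phi\in(\pi/2,\pi)$, $K>0$ as in the context) generating the analytic semigroup $(T_t)_{t\ge 0}\subset L(X)$, and let $B:\mathrm{D}(B)\to X$ be a closed linear operator with $\mathrm{D}(A)\subseteq \mathrm{D}(B)$ and $B\,\mathrm{D}(A)\subseteq\mathrm{D}(A)$. Assume that the generalized nested commutators $\{B,A^m\}$ (defined in the context) are defined for all $m\in\mathbb Z_+$, that $\{B,A^m\}\mathrm{D}(A)\subseteq\mathrm{D}(A)$ for all $m\in\mathbb Z_+$, and that there exist constants $\eta>0$, $K_1>0$ such that $$\|\{B,A^{m}\}R_{A}(\lambda)\|_{L(X)}\le\frac{K_1\eta^m}{|\lambda-a|}\quad\text{for all } m\in\mathbb Z_+,\ \lambda\in\Sigma_{a,\phi}.$$ Then for every $t>0$ and every $x\in\mathrm{D}(A)$ the series below converges in $X$ and $$BT_tx=T_t\sum_{m=0}^{\infty}\frac{t^m}{m!}\{B,A^m\}x .$$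
   Context: $\mathbb Z_+$ denotes the non-negative integers; $L(X)$ the bounded linear operators on $X$; $R_A(\lambda)=(\lambda\,\mathrm{id}-A)^{-1}$ the resolvent and $\rho(A)$ the resolvent set. A closed densely defined operator $A$ is sectorial if for some $a\in\mathbb R$, $\phi\in(\pi/2,\pi)$ the sector $\Sigma_{a,\phi}:=\{\lambda\in\mathbb C\setminus\{a\}: |\arg(\lambda-a)|<\phi\}$ is contained in $\rho(A)$ and there is $K>0$ with $\|R_A(\lambda)\|\le K/|\lambda-a|$ for all $\lambda\in\Sigma_{a,\phi}$; such $A$ generates an analytic semigroup $(T_t)$. Generalized nested commutators are defined inductively: $\{B,A^0\}:=B$. If a linear operator $\{B,A^m\}$ with domain $\mathrm{D}(\{B,A^m\})\supseteq \mathrm{D}(A)$ is defined, set $\widehat{\mathrm D}:=\{x\in \mathrm{D}(A)\cap\mathrm{D}(\{B,A^m\}) : Ax\in\mathrm{D}(\{B,A^m\}),\ \{B,A^m\}x\in\mathrm{D}(A)\}$; it is required that $\widehat{\mathrm D}\supseteq\mathrm{D}(A)$ and that the operator $\widehat{\mathrm D}\ni x\mapsto \{B,A^m\}Ax-A\{B,A^m\}x$ be closable; its closure is $\{B,A^{m+1}\}$. "$\{B,A^m\}$ is defined for all $m$" means these requirements hold at every step. For bounded operators this reduces to $\{D,C^{m+1}\}=[\{D,C^m\},C]$ with $[D,C]=DC-CD$. *)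

theory Defs
  imports "HOL-Analysis.Analysis"
begin

class complex_banach = banach +
  fixes scaleC :: "complex \<Rightarrow> 'a \<Rightarrow> 'a" (infixr \<open>*\<^sub>C\<close> 75)
  assumes scaleC_of_real: "scaleC (of_real r) x = scaleR r x"
    and scaleC_add_right: "scaleC c (x + y) = scaleC c x + scaleC c y"
    and scaleC_add_left: "scaleC (c + d) x = scaleC c x + scaleC d x"
    and scaleC_scaleC: "scaleC c (scaleC d x) = scaleC (c * d) x"
    and scaleC_one: "scaleC 1 x = x"
    and norm_scaleC: "norm (scaleC c x) = cmod c * norm x"

text \<open>An operator is a pair of its domain and its action (values outside
  the domain are irrelevant).\<close>

type_synonym 'a op = "'a set \<times> ('a \<Rightarrow> 'a)"

abbreviation dom_op :: "'a op \<Rightarrow> 'a set" where "dom_op A \<equiv> fst A"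
abbreviation app_op :: "'a op \<Rightarrow> 'a \<Rightarrow> 'a" where "app_op A \<equiv> snd A"

definition csubspace :: "'a::complex_banach set \<Rightarrow> bool" where
  "csubspace S \<longleftrightarrow> 0 \<in> S \<and> (\<forall>x\<in>S. \<forall>y\<in>S. x + y \<in> S) \<and> (\<forall>c. \<forall>x\<in>S. c *\<^sub>C x \<in> S)"

definition linear_op :: "'a::complex_banach op \<Rightarrow> bool" where
  "linear_op A \<longleftrightarrow> csubspace (dom_op A) \<and>
     (\<forall>x\<in>dom_op A. \<forall>y\<in>dom_op A. app_op A (x + y) = app_op A x + app_op A y) \<and>
     (\<forall>c. \<forall>x\<in>dom_op A. app_op A (c *\<^sub>C x) = c *\<^sub>C app_op A x)"

definition bounded_clinear_fun :: "('a::complex_banach \<Rightarrow> 'a) \<Rightarrow> bool" where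
  "bounded_clinear_fun f \<longleftrightarrow> (\<forall>x y. f (x + y) = f x + f y) \<and> (\<forall>c x. f (c *\<^sub>C x) = c *\<^sub>C f x)
     \<and> (\<exists>K. \<forall>x. norm (f x) \<le> K * norm x)"

definition graph_op :: "'a op \<Rightarrow> ('a \<times> 'a) set" where
  "graph_op A = {(x, app_op A x) | x. x \<in> dom_op A}"

definition closed_op :: "'a::complex_banach op \<Rightarrow> bool" where
  "closed_op A \<longleftrightarrow> linear_op A \<and> closed (graph_op A)"

definition densely_defined :: "'a::complex_banach op \<Rightarrow> bool" where
  "densely_defined A \<longleftrightarrow> closure (dom_op A) = UNIV"

definition closable_op :: "'a::complex_banach op \<Rightarrow> bool" where
  "closable_op A \<longleftrightarrow> (\<forall>x y z. (x, y) \<in> closure (graph_op A) \<longrightarrow> (x, z) \<in> closure (graph_op A) \<longrightarrow> y = z)"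

definition op_closure :: "'a::complex_banach op \<Rightarrow> 'a op" where
  "op_closure A = ({x. \<exists>y. (x, y) \<in> closure (graph_op A)},
                   \<lambda>x. THE y. (x, y) \<in> closure (graph_op A))"

definition is_resolvent :: "'a::complex_banach op \<Rightarrow> complex \<Rightarrow> ('a \<Rightarrow> 'a) \<Rightarrow> bool" where
  "is_resolvent A z R \<longleftrightarrow> bounded_clinear_fun R \<and>
     (\<forall>x. R x \<in> dom_op A \<and> z *\<^sub>C R x - app_op A (R x) = x) \<and>
     (\<forall>y\<in>dom_op A. R (z *\<^sub>C y - app_op A y) = y)"

definition resolvent_set :: "'a::complex_banach op \<Rightarrow> complex set" where
  "resolvent_set A = {z. \<exists>R. is_resolvent A z R}"

definition resolvent :: "'a::complex_banach op \<Rightarrow> complex \<Rightarrow> 'a \<Rightarrow> 'a" where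
  "resolvent A z = (THE R. is_resolvent A z R)"

definition sector :: "real \<Rightarrow> real \<Rightarrow> complex set" where
  "sector a \<phi> = {z. z \<noteq> complex_of_real a \<and> \<bar>Arg (z - complex_of_real a)\<bar> < \<phi>}"

definition sectorial :: "'a::complex_banach op \<Rightarrow> real \<Rightarrow> real \<Rightarrow> real \<Rightarrow> bool" where
  "sectorial A a \<phi> K \<longleftrightarrow> closed_op A \<and> densely_defined A \<and>
     pi / 2 < \<phi> \<and> \<phi> < pi \<and> K > 0 \<and> sector a \<phi> \<subseteq> resolvent_set A \<and>
     (\<forall>z\<in>sector a \<phi>. \<forall>x. norm (resolvent A z x) \<le> K / cmod (z - complex_of_real a) * norm x)"

definition generates_semigroup :: "'a::complex_banach op \<Rightarrow> (real \<Rightarrow> 'a \<Rightarrow> 'a) \<Rightarrow> bool" where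
  "generates_semigroup A T \<longleftrightarrow>
     (\<forall>t\<ge>0. bounded_clinear_fun (T t)) \<and>
     (\<forall>x. T 0 x = x) \<and>
     (\<forall>s\<ge>0. \<forall>t\<ge>0. \<forall>x. T (s + t) x = T s (T t x)) \<and>
     (\<forall>x. ((\<lambda>t. T t x) \<longlongrightarrow> x) (at_right 0)) \<and>
     dom_op A = {x. \<exists>y. ((\<lambda>h. (1 / h) *\<^sub>R (T h x - x)) \<longlongrightarrow> y) (at_right 0)} \<and>
     (\<forall>x\<in>dom_op A. ((\<lambda>h. (1 / h) *\<^sub>R (T h x - x)) \<longlongrightarrow> app_op A x) (at_right 0))"

definition comm_dom_hat :: "'a::complex_banach op \<Rightarrow> 'a op \<Rightarrow> 'a set" where
  "comm_dom_hat C A = {x \<in> dom_op A \<inter> dom_op C. app_op A x \<in> dom_op C \<and> app_op C x \<in> dom_op A}"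

definition comm_step :: "'a::complex_banach op \<Rightarrow> 'a op \<Rightarrow> 'a op" where
  "comm_step C A = (comm_dom_hat C A, \<lambda>x. app_op C (app_op A x) - app_op A (app_op C x))"

text \<open>nested_comm B A m is {B, A^m}.\<close>
fun nested_comm :: "'a::complex_banach op \<Rightarrow> 'a op \<Rightarrow> nat \<Rightarrow> 'a op" where
  "nested_comm B A 0 = B"
| "nested_comm B A (Suc m) = op_closure (comm_step (nested_comm B A m) A)"

definition nested_comm_defined :: "'a::complex_banach op \<Rightarrow> 'a op \<Rightarrow> bool" where
  "nested_comm_defined B A \<longleftrightarrow>
     (\<forall>m. dom_op A \<subseteq> dom_op (nested_comm B A m) \<and>
          dom_op A \<subseteq> comm_dom_hat (nested_comm B A m) A \<and>
          closable_op (comm_step (nested_comm B A m) A))"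

end

theory Submission
  imports Defs
begin


lemma ubp:
  fixes f :: "nat \<Rightarrow> 'a::banach \<Rightarrow> 'b::real_normed_vector"
  assumes lin: "\<And>n. bounded_linear (f n)" and pw: "\<And>x. \<exists>C. \<forall>n. norm (f n x) \<le> C"
  shows "\<exists>M. \<forall>n x. norm (f n x) \<le> M * norm x"
proof -
  define F where "F k = {x. \<forall>n. norm (f n x) \<le> real k}" for k :: nat
  have clF: "closed (F k)" for k
  proof -
    have "F k = (\<Inter>n. {x. norm (f n x) \<le> real k})" unfolding F_def by auto
    moreover have "closed {x. norm (f n x) \<le> real k}" for n
      by (intro closed_Collect_le continuous_intros linear_continuous_on[OF lin])
    ultimately show ?thesis by auto
  qed
  have unionF0: "x \<in> (\<Union>k. F k)" for x
  proof -
    obtain C where "\<forall>n. norm (f n x) \<le> C" using pw by blast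
    moreover obtain k :: nat where "C \<le> real k" using real_arch_simple by blast
    ultimately have "x \<in> F k" unfolding F_def by (auto intro: order_trans)
    then show "x \<in> (\<Union>k. F k)" by blast
  qed
  have unionF: "(\<Union>k. F k) = UNIV" using unionF0 by blast
  have "\<exists>k. interior (F k) \<noteq> {}"
  proof (rule ccontr)
    assume "\<not> ?thesis"
    then have "euclidean interior_of \<Union>(range F) = {}"
      by (intro Baire_category_alt) (auto simp: completely_metrizable_space_euclidean clF)
    then show False using unionF by simp
  qed
  then obtain k x0 where "x0 \<in> interior (F k)" by blast
  then obtain r where r: "r > 0" "ball x0 r \<subseteq> F k"
    by (meson mem_interior)
  have small: "norm (f n y) \<le> 2 * real k" if "norm y < r" for n y
  proof -
    have "x0 + y \<in> F k" "x0 \<in> F k" using r that by (auto simp: dist_norm)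
    then have "norm (f n (x0 + y)) \<le> real k" "norm (f n x0) \<le> real k" unfolding F_def by auto
    moreover have "f n y = f n (x0 + y) - f n x0"
      using linear_diff[OF bounded_linear.linear[OF lin]] by (simp add: linear_add[OF bounded_linear.linear[OF lin]])
    ultimately show ?thesis by (smt (verit) norm_triangle_ineq4)
  qed
  have "norm (f n x) \<le> (4 * real k / r) * norm x" for n x
  proof (cases "x = 0")
    case True then show ?thesis using linear_0[OF bounded_linear.linear[OF lin]] by simp
  next
    case False
    define c where "c = r / (2 * norm x)"
    have c: "c > 0" using False r by (simp add: c_def)
    have "norm (c *\<^sub>R x) < r" using False r by (simp add: c_def)
    then have "norm (f n (c *\<^sub>R x)) \<le> 2 * real k" by (rule small)
    moreover have "f n (c *\<^sub>R x) = c *\<^sub>R f n x" by (simp add: linear_scale[OF bounded_linear.linear[OF lin]])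
    ultimately have "c * norm (f n x) \<le> 2 * real k" using c by simp
    then have "norm (f n x) \<le> 2 * real k / c" using c by (simp add: field_simps)
    also have "2 * real k / c = (4 * real k / r) * norm x" using False r by (simp add: c_def field_simps)
    finally show ?thesis .
  qed
  then show ?thesis by blast
qed

lemma scaleC_zero_right [simp]: "c *\<^sub>C (0::'a::complex_banach) = 0"
proof -
  have "c *\<^sub>C (0::'a) = c *\<^sub>C 0 + c *\<^sub>C 0" by (metis add_0 scaleC_add_right)
  then show ?thesis by simp
qed

lemma scaleC_minus_right: "c *\<^sub>C (- x::'a::complex_banach) = - (c *\<^sub>C x)"
proof -
  have "c *\<^sub>C (- x) + c *\<^sub>C x = 0" by (metis scaleC_add_right scaleC_zero_right add.left_inverse)
  then show ?thesis by (simp add: eq_neg_iff_add_eq_0)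
qed

lemma scaleC_diff_right: "c *\<^sub>C (x - y::'a::complex_banach) = c *\<^sub>C x - c *\<^sub>C y"
  by (metis diff_conv_add_uminus scaleC_add_right scaleC_minus_right)

lemma scaleC_minus1: "(-1) *\<^sub>C (x::'a::complex_banach) = - x"
  by (metis of_real_1 of_real_minus scaleC_of_real scaleR_minus1_left)

lemma tendsto_scaleC:
  fixes f :: "'b \<Rightarrow> 'a::complex_banach"
  assumes "(f \<longlongrightarrow> l) F"
  shows "((\<lambda>x. c *\<^sub>C f x) \<longlongrightarrow> c *\<^sub>C l) F"
proof -
  have "((\<lambda>x. f x - l) \<longlongrightarrow> 0) F" using assms by (simp add: LIM_zero)
  then have h: "((\<lambda>x. cmod c * norm (f x - l)) \<longlongrightarrow> 0) F"
    using tendsto_mult_right_zero tendsto_norm_zero by blast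
  have "((\<lambda>x. c *\<^sub>C f x - c *\<^sub>C l) \<longlongrightarrow> 0) F"
  proof (rule Lim_null_comparison)
    have "norm (c *\<^sub>C f x - c *\<^sub>C l) \<le> cmod c * norm (f x - l)" for x
      by (metis scaleC_diff_right norm_scaleC order_refl)
    then show "\<forall>\<^sub>F x in F. norm (c *\<^sub>C f x - c *\<^sub>C l) \<le> cmod c * norm (f x - l)" by simp
  qed (rule h)
  then show ?thesis by (simp add: LIM_zero_iff)
qed

lemma bclf_bounded_linear:
  assumes "bounded_clinear_fun f"
  shows "bounded_linear f"
proof -
  from assms obtain K where add: "\<And>x y. f (x + y) = f x + f y" and sc: "\<And>c x. f (c *\<^sub>C x) = c *\<^sub>C f x"
    and K: "\<And>x. norm (f x) \<le> K * norm x" unfolding bounded_clinear_fun_def by blast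
  show ?thesis
  proof (rule bounded_linear_intro)
    show "f (x + y) = f x + f y" for x y by (rule add)
    show "f (r *\<^sub>R x) = r *\<^sub>R f x" for r x by (metis sc scaleC_of_real)
    show "norm (f x) \<le> norm x * K" for x using K[of x] by (simp add: mult.commute)
  qed
qed

lemma linop_add: "linear_op C \<Longrightarrow> x \<in> dom_op C \<Longrightarrow> y \<in> dom_op C \<Longrightarrow> x + y \<in> dom_op C \<and> app_op C (x + y) = app_op C x + app_op C y"
  unfolding linear_op_def csubspace_def by blast

lemma linop_scaleC: "linear_op C \<Longrightarrow> x \<in> dom_op C \<Longrightarrow> c *\<^sub>C x \<in> dom_op C \<and> app_op C (c *\<^sub>C x) = c *\<^sub>C app_op C x"
  unfolding linear_op_def csubspace_def by blast

lemma linop_scaleR: "linear_op C \<Longrightarrow> x \<in> dom_op C \<Longrightarrow> r *\<^sub>R x \<in> dom_op C \<and> app_op C (r *\<^sub>R x) = r *\<^sub>R app_op C x"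
  using linop_scaleC[of C x "of_real r"] by (simp add: scaleC_of_real)

lemma linop_zero: "linear_op C \<Longrightarrow> 0 \<in> dom_op C \<and> app_op C 0 = 0"
  using linop_scaleR[of C 0 0] unfolding linear_op_def csubspace_def by auto

lemma linop_minus: "linear_op C \<Longrightarrow> x \<in> dom_op C \<Longrightarrow> - x \<in> dom_op C \<and> app_op C (- x) = - app_op C x"
  using linop_scaleR[of C x "-1"] by simp

lemma linop_diff: "linear_op C \<Longrightarrow> x \<in> dom_op C \<Longrightarrow> y \<in> dom_op C \<Longrightarrow> x - y \<in> dom_op C \<and> app_op C (x - y) = app_op C x - app_op C y"
  using linop_add[of C x "-y"] linop_minus[of C y] by simp

lemma graph_add: "linear_op C \<Longrightarrow> p \<in> graph_op C \<Longrightarrow> q \<in> graph_op C \<Longrightarrow> p + q \<in> graph_op C"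
  unfolding graph_op_def using linop_add[of C] by (auto simp: plus_prod_def)

lemma graph_scaleC: "linear_op C \<Longrightarrow> p \<in> graph_op C \<Longrightarrow> (c *\<^sub>C fst p, c *\<^sub>C snd p) \<in> graph_op C"
  unfolding graph_op_def using linop_scaleC[of C] by auto

lemma closure_graph_add:
  assumes "linear_op C" "p \<in> closure (graph_op C)" "q \<in> closure (graph_op C)"
  shows "p + q \<in> closure (graph_op C)"
proof -
  obtain u where u: "\<And>n. u n \<in> graph_op C" "u \<longlonglongrightarrow> p" using assms(2) closure_sequential by blast
  obtain v where v: "\<And>n. v n \<in> graph_op C" "v \<longlonglongrightarrow> q" using assms(3) closure_sequential by blast
  have "\<forall>n. u n + v n \<in> graph_op C" using graph_add[OF assms(1)] u v by blast
  moreover have "(\<lambda>n. u n + v n) \<longlonglongrightarrow> p + q" using u v by (intro tendsto_add)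
  ultimately show ?thesis unfolding closure_sequential by (intro exI[of _ "\<lambda>n. u n + v n"]) simp
qed

lemma closure_graph_scaleC:
  assumes "linear_op C" "(x, y) \<in> closure (graph_op C)"
  shows "(c *\<^sub>C x, c *\<^sub>C y) \<in> closure (graph_op C)"
proof -
  obtain u where u: "\<And>n. u n \<in> graph_op C" "u \<longlonglongrightarrow> (x, y)" using assms(2) closure_sequential by blast
  have "\<forall>n. (c *\<^sub>C fst (u n), c *\<^sub>C snd (u n)) \<in> graph_op C" using graph_scaleC[OF assms(1)] u by blast
  moreover have "(\<lambda>n. (c *\<^sub>C fst (u n), c *\<^sub>C snd (u n))) \<longlonglongrightarrow> (c *\<^sub>C x, c *\<^sub>C y)"
    using tendsto_fst[OF u(2)] tendsto_snd[OF u(2)] by (intro tendsto_Pair tendsto_scaleC) auto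
  ultimately show ?thesis unfolding closure_sequential by (intro exI[of _ "\<lambda>n. (c *\<^sub>C fst (u n), c *\<^sub>C snd (u n))"]) simp
qed

lemma op_closure_graph:
  assumes "closable_op C" "x \<in> dom_op (op_closure C)"
  shows "(x, app_op (op_closure C) x) \<in> closure (graph_op C)"
proof -
  obtain y where y: "(x, y) \<in> closure (graph_op C)" using assms(2) unfolding op_closure_def by auto
  have "(THE y. (x, y) \<in> closure (graph_op C)) = y"
    using y assms(1) unfolding closable_op_def by (intro the_equality) blast+
  then show ?thesis using y unfolding op_closure_def by simp
qed

lemma op_closure_eq:
  assumes "closable_op C" "(x, y) \<in> closure (graph_op C)"
  shows "x \<in> dom_op (op_closure C) \<and> app_op (op_closure C) x = y"
proof -
  have d: "x \<in> dom_op (op_closure C)" using assms(2) unfolding op_closure_def by auto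
  then show ?thesis using op_closure_graph[OF assms(1) d] assms unfolding closable_op_def by blast
qed

lemma op_closure_ext:
  assumes "closable_op C" "x \<in> dom_op C"
  shows "x \<in> dom_op (op_closure C) \<and> app_op (op_closure C) x = app_op C x"
  using op_closure_eq[OF assms(1), of x "app_op C x"] assms(2) closure_subset[of "graph_op C"]
  unfolding graph_op_def by blast

lemma op_closure_linear:
  assumes lin: "linear_op C" and cl: "closable_op C"
  shows "linear_op (op_closure C)"
proof -
  let ?D = "op_closure C"
  have 0: "0 \<in> dom_op C" using linop_zero[OF lin] by simp
  have add: "x + y \<in> dom_op ?D \<and> app_op ?D (x + y) = app_op ?D x + app_op ?D y"
    if "x \<in> dom_op ?D" "y \<in> dom_op ?D" for x y
  proof -
    have "(x, app_op ?D x) + (y, app_op ?D y) \<in> closure (graph_op C)"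
      using closure_graph_add[OF lin op_closure_graph[OF cl that(1)] op_closure_graph[OF cl that(2)]] .
    then show ?thesis using op_closure_eq[OF cl] by simp
  qed
  have sc: "c *\<^sub>C x \<in> dom_op ?D \<and> app_op ?D (c *\<^sub>C x) = c *\<^sub>C app_op ?D x"
    if "x \<in> dom_op ?D" for x c
    using op_closure_eq[OF cl closure_graph_scaleC[OF lin op_closure_graph[OF cl that]]] .
  show ?thesis
    unfolding linear_op_def csubspace_def using add sc op_closure_ext[OF cl 0] by blast
qed

lemma comm_step_linear:
  assumes C: "linear_op C" and A: "linear_op A"
  shows "linear_op (comm_step C A)"
proof -
  have D: "dom_op (comm_step C A) = comm_dom_hat C A" by (simp add: comm_step_def)
  have ap: "app_op (comm_step C A) x = app_op C (app_op A x) - app_op A (app_op C x)" for x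
    by (simp add: comm_step_def)
  have "0 \<in> comm_dom_hat C A" using linop_zero[OF C] linop_zero[OF A] by (simp add: comm_dom_hat_def)
  moreover have "x + y \<in> comm_dom_hat C A \<and> app_op (comm_step C A) (x + y) = app_op (comm_step C A) x + app_op (comm_step C A) y"
    if "x \<in> comm_dom_hat C A" "y \<in> comm_dom_hat C A" for x y
    using that linop_add[OF C] linop_add[OF A] unfolding comm_dom_hat_def ap by (auto simp: algebra_simps)
  moreover have "c *\<^sub>C x \<in> comm_dom_hat C A \<and> app_op (comm_step C A) (c *\<^sub>C x) = c *\<^sub>C app_op (comm_step C A) x"
    if "x \<in> comm_dom_hat C A" for x c
    using that linop_scaleC[OF C] linop_scaleC[OF A] unfolding comm_dom_hat_def ap by (auto simp: scaleC_diff_right)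
  ultimately show ?thesis unfolding linear_op_def csubspace_def D by blast
qed


lemma vder_iff:
  fixes f :: "real \<Rightarrow> 'b::real_normed_vector"
  shows "(f has_vector_derivative D) (at x within S) \<longleftrightarrow> ((\<lambda>y. (f y - f x) /\<^sub>R (y - x)) \<longlongrightarrow> D) (at x within S)"
proof -
  have ev: "\<forall>\<^sub>F y in at x within S. y \<noteq> x" by (simp add: eventually_at_filter)
  have eq: "norm (f y - f x - (y - x) *\<^sub>R D) / norm (y - x) = norm ((f y - f x) /\<^sub>R (y - x) - D)" if "y \<noteq> x" for y
  proof -
    have "(f y - f x) /\<^sub>R (y - x) - D = (1 / (y - x)) *\<^sub>R (f y - f x - (y - x) *\<^sub>R D)"
      using that by (simp add: scaleR_diff_right divide_inverse_commute)
    then show ?thesis by (simp add: divide_inverse_commute)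
  qed
  have "((\<lambda>y. norm (f y - f x - (y - x) *\<^sub>R D) / norm (y - x)) \<longlongrightarrow> 0) (at x within S)
     \<longleftrightarrow> ((\<lambda>y. norm ((f y - f x) /\<^sub>R (y - x) - D)) \<longlongrightarrow> 0) (at x within S)"
    by (rule tendsto_cong) (use ev eq in \<open>auto elim: eventually_mono\<close>)
  also have "\<dots> \<longleftrightarrow> ((\<lambda>y. (f y - f x) /\<^sub>R (y - x)) \<longlongrightarrow> D) (at x within S)"
    by (simp add: tendsto_norm_zero_iff LIM_zero_iff)
  finally show ?thesis
    unfolding has_vector_derivative_def has_derivative_iff_norm
    using bounded_linear_scaleR_left by blast
qed

locale sgp =
  fixes A :: "'a::complex_banach op" and T :: "real \<Rightarrow> 'a \<Rightarrow> 'a"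
  assumes gen: "generates_semigroup A T" and linA: "linear_op A"
begin

lemma Tbl: "r \<ge> 0 \<Longrightarrow> bounded_linear (T r)"
  using gen bclf_bounded_linear unfolding generates_semigroup_def by blast

lemma Tsemi: "s \<ge> 0 \<Longrightarrow> r \<ge> 0 \<Longrightarrow> T (s + r) x = T s (T r x)"
  using gen unfolding generates_semigroup_def by blast

lemma T0: "T 0 x = x"
  using gen unfolding generates_semigroup_def by blast

lemma Tright: "((\<lambda>h. T h x) \<longlongrightarrow> x) (at_right 0)"
  using gen unfolding generates_semigroup_def by blast

lemma Tdomchar: "dom_op A = {x. \<exists>y. ((\<lambda>h. (1 / h) *\<^sub>R (T h x - x)) \<longlongrightarrow> y) (at_right 0)}"
  using gen unfolding generates_semigroup_def by blast

lemma Tgen: "x \<in> dom_op A \<Longrightarrow> ((\<lambda>h. (1 / h) *\<^sub>R (T h x - x)) \<longlongrightarrow> app_op A x) (at_right 0)"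
  using gen unfolding generates_semigroup_def by blast

lemma Tdiff: "r \<ge> 0 \<Longrightarrow> T r (x - y) = T r x - T r y"
  using Tbl[THEN bounded_linear.linear] linear_diff by blast

lemma TscaleR: "r \<ge> 0 \<Longrightarrow> T r (c *\<^sub>R x) = c *\<^sub>R T r x"
  using Tbl[THEN bounded_linear.linear] linear_scale by blast

lemma T0_small:
  assumes "e > 0"
  shows "\<exists>d>0. \<forall>h. 0 \<le> h \<and> h < d \<longrightarrow> norm (T h x - x) < e"
proof -
  have "\<forall>\<^sub>F h in at_right 0. dist (T h x) x < e" using Tright[of x] assms unfolding tendsto_iff by blast
  then obtain b where b: "b > 0" "\<And>h. h > 0 \<Longrightarrow> h < b \<Longrightarrow> dist (T h x) x < e"
    unfolding eventually_at_right_field by auto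
  show ?thesis
  proof (intro exI[of _ b] conjI allI impI)
    fix h assume h: "0 \<le> h \<and> h < b"
    show "norm (T h x - x) < e"
    proof (cases "h = 0")
      case True then show ?thesis using assms by (simp add: T0)
    next
      case False then show ?thesis using b(2)[of h] h by (simp add: dist_norm)
    qed
  qed (rule b(1))
qed

lemma local_bound0: "\<exists>d>0. \<exists>M. \<forall>h. 0 \<le> h \<and> h \<le> d \<longrightarrow> (\<forall>x. norm (T h x) \<le> M * norm x)"
proof (rule ccontr)
  assume "\<not> ?thesis"
  then have "\<forall>n::nat. \<exists>p. 0 \<le> fst p \<and> fst p \<le> 1 / real (Suc n) \<and> norm (T (fst p) (snd p)) > real n * norm (snd p)"
    by (auto simp: not_le)
  then obtain p where p: "\<And>n. 0 \<le> fst (p n) \<and> fst (p n) \<le> 1 / real (Suc n) \<and> norm (T (fst (p n)) (snd (p n))) > real n * norm (snd (p n))"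
    by metis
  define r where "r n = fst (p n)" for n
  define x where "x n = snd (p n)" for n
  have r0: "r n \<ge> 0" for n using p r_def by auto
  have "\<exists>M. \<forall>n y. norm (T (r n) y) \<le> M * norm y"
  proof (rule ubp)
    show "bounded_linear (T (r n))" for n using Tbl r0 by blast
    fix y
    obtain d where d: "d > 0" "\<And>h. 0 \<le> h \<and> h < d \<Longrightarrow> norm (T h y - y) < 1"
      using T0_small[of 1 y] by auto
    obtain N :: nat where N: "1 / d < real N" using reals_Archimedean2 by blast
    have "norm (T (r n) y) \<le> norm y + 1 + (\<Sum>k<N. norm (T (r k) y))" for n
    proof (cases "n < N")
      case True
      have "norm (T (r n) y) \<le> (\<Sum>k<N. norm (T (r k) y))"
        using True by (intro member_le_sum) auto
      moreover have "(\<Sum>k<N. norm (T (r k) y)) \<ge> 0" by (intro sum_nonneg) auto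
      ultimately show ?thesis by (smt (verit) norm_ge_zero)
    next
      case False
      have "1 / real (Suc n) < d"
      proof -
        have "1 / d < real (Suc n)" using N False by simp
        then show ?thesis using d(1) by (simp add: field_simps)
      qed
      then have "r n < d" using p[of n] r_def by auto
      then have "norm (T (r n) y - y) < 1" using d(2) r0 by blast
      moreover have "(\<Sum>k<N. norm (T (r k) y)) \<ge> 0" by (intro sum_nonneg) auto
      ultimately show ?thesis by (smt (verit) norm_triangle_ineq2)
    qed
    then show "\<exists>C. \<forall>n. norm (T (r n) y) \<le> C" by blast
  qed
  then obtain M where M: "\<And>n y. norm (T (r n) y) \<le> M * norm y" by blast
  obtain n :: nat where n: "M \<le> real n" using real_arch_simple by blast
  have "norm (T (r n) (x n)) > real n * norm (x n)" using p r_def x_def by auto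
  moreover have "real n * norm (x n) \<ge> M * norm (x n)" using n by (simp add: mult_right_mono)
  ultimately show False using M[of n "x n"] by simp
qed

lemma local_bound:
  assumes "t \<ge> 0"
  shows "\<exists>M\<ge>1. \<forall>r. 0 \<le> r \<and> r \<le> t \<longrightarrow> (\<forall>x. norm (T r x) \<le> M * norm x)"
proof -
  obtain d M0 where d: "d > 0" and M0: "\<And>h x. 0 \<le> h \<Longrightarrow> h \<le> d \<Longrightarrow> norm (T h x) \<le> M0 * norm x"
    using local_bound0 by blast
  define M1 where "M1 = max 1 M0"
  have M1: "M1 \<ge> 1" "M0 \<le> M1" by (auto simp: M1_def)
  have P: "\<forall>r. 0 \<le> r \<and> r \<le> real (Suc n) * d \<longrightarrow> (\<forall>x. norm (T r x) \<le> M1 ^ Suc n * norm x)" for n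
  proof (induction n)
    case 0
    show ?case
    proof (intro allI impI)
      fix r x assume "0 \<le> r \<and> r \<le> real (Suc 0) * d"
      then have "norm (T r x) \<le> M0 * norm x" using M0 by simp
      also have "\<dots> \<le> M1 * norm x" using M1 by (simp add: mult_right_mono)
      finally show "norm (T r x) \<le> M1 ^ Suc 0 * norm x" by simp
    qed
  next
    case (Suc n)
    show ?case
    proof (intro allI impI)
      fix r x assume r: "0 \<le> r \<and> r \<le> real (Suc (Suc n)) * d"
      show "norm (T r x) \<le> M1 ^ Suc (Suc n) * norm x"
      proof (cases "r \<le> real (Suc n) * d")
        case True
        then have "norm (T r x) \<le> M1 ^ Suc n * norm x" using Suc r by blast
        also have "\<dots> \<le> M1 ^ Suc (Suc n) * norm x"
          using M1 by (intro mult_right_mono power_increasing) auto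
        finally show ?thesis .
      next
        case False
        have dn: "0 \<le> d * real n" using d by simp
        have e1: "real (Suc n) * d = d * real n + d" "real (Suc (Suc n)) * d = d * real n + d + d"
          by (simp_all add: algebra_simps)
        have rd: "r - d \<ge> 0" "r - d \<le> real (Suc n) * d" using r d dn False unfolding e1 by linarith+
        have "T r x = T d (T (r - d) x)" using Tsemi[of d "r - d" x] rd d by simp
        then have "norm (T r x) \<le> M0 * norm (T (r - d) x)" using M0 d by simp
        also have "\<dots> \<le> M1 * norm (T (r - d) x)" using M1 by (simp add: mult_right_mono)
        also have "\<dots> \<le> M1 * (M1 ^ Suc n * norm x)"
          using Suc rd M1 by (intro mult_left_mono) auto
        finally show ?thesis by simp
      qed
    qed
  qed
  obtain n :: nat where n: "t / d \<le> real n" using real_arch_simple by blast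
  have "t \<le> real (Suc n) * d" using n d by (simp add: field_simps)
  then have "\<forall>r. 0 \<le> r \<and> r \<le> t \<longrightarrow> (\<forall>x. norm (T r x) \<le> M1 ^ Suc n * norm x)" using P[of n] by auto
  moreover have "M1 ^ Suc n \<ge> 1" using M1 one_le_power[of M1 "Suc n"] by blast
  ultimately show ?thesis by blast
qed

lemma Tdom:
  assumes y: "y \<in> dom_op A" and r: "r \<ge> 0"
  shows "T r y \<in> dom_op A \<and> app_op A (T r y) = T r (app_op A y)"
proof -
  have lim: "((\<lambda>h. T r ((1 / h) *\<^sub>R (T h y - y))) \<longlongrightarrow> T r (app_op A y)) (at_right 0)"
    using Tgen[OF y] Tbl[OF r] by (rule bounded_linear.tendsto[rotated])
  have eq: "\<forall>\<^sub>F h in at_right 0. T r ((1 / h) *\<^sub>R (T h y - y)) = (1 / h) *\<^sub>R (T h (T r y) - T r y)"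
  proof -
    have "T r ((1 / h) *\<^sub>R (T h y - y)) = (1 / h) *\<^sub>R (T h (T r y) - T r y)" if "h > 0" for h
    proof -
      have "T h (T r y) = T r (T h y)" using Tsemi[of h r y] Tsemi[of r h y] that r by (simp add: add.commute)
      then show ?thesis using r by (simp add: TscaleR Tdiff)
    qed
    then show ?thesis by (simp add: eventually_at_right_field) (meson zero_less_one)
  qed
  have lim2: "((\<lambda>h. (1 / h) *\<^sub>R (T h (T r y) - T r y)) \<longlongrightarrow> T r (app_op A y)) (at_right 0)"
    using tendsto_cong[OF eq] lim by simp
  then have d: "T r y \<in> dom_op A" using Tdomchar by blast
  then have "((\<lambda>h. (1 / h) *\<^sub>R (T h (T r y) - T r y)) \<longlongrightarrow> app_op A (T r y)) (at_right 0)" by (rule Tgen)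
  with lim2 have "app_op A (T r y) = T r (app_op A y)"
    by (intro tendsto_unique[OF _ _ lim2]) (auto simp: trivial_limit_at_right_real)
  with d show ?thesis by blast
qed

lemma Tcont:
  assumes Mb: "\<And>r x. 0 \<le> r \<Longrightarrow> r \<le> t \<Longrightarrow> norm (T r x) \<le> M * norm x" and M: "M \<ge> 1"
    and r: "r \<in> {0..t}"
  shows "((\<lambda>s. T s y) \<longlongrightarrow> T r y) (at r within {0..t})"
  unfolding tendsto_iff
proof (intro allI impI)
  fix e :: real assume e: "e > 0"
  obtain d where d: "d > 0" "\<And>h. 0 \<le> h \<and> h < d \<Longrightarrow> norm (T h y - y) < e / M"
    using T0_small[of "e / M" y] e M by auto
  show "\<forall>\<^sub>F s in at r within {0..t}. dist (T s y) (T r y) < e"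
    unfolding eventually_at
  proof (intro exI[of _ d] conjI ballI impI)
    fix s assume s: "s \<in> {0..t}" "s \<noteq> r \<and> dist s r < d"
    have Mpos: "M > 0" using M by simp
    show "dist (T s y) (T r y) < e"
    proof (cases "r \<le> s")
      case True
      have "T s y = T r (T (s - r) y)" using Tsemi[of r "s - r" y] True r by simp
      then have "T s y - T r y = T r (T (s - r) y - y)" using r by (simp add: Tdiff)
      then have "dist (T s y) (T r y) \<le> M * norm (T (s - r) y - y)"
        using Mb[of r] r by (simp add: dist_norm)
      also have "\<dots> < M * (e / M)"
        using d(2)[of "s - r"] s True Mpos by (intro mult_strict_left_mono) (auto simp: dist_real_def)
      also have "\<dots> = e" using Mpos by simp
      finally show ?thesis .
    next
      case False
      have "T r y = T s (T (r - s) y)" using Tsemi[of s "r - s" y] False s by simp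
      then have "T r y - T s y = T s (T (r - s) y - y)" using s by (simp add: Tdiff)
      then have "dist (T s y) (T r y) = norm (T s (T (r - s) y - y))"
        by (metis dist_commute dist_norm)
      then have "dist (T s y) (T r y) \<le> M * norm (T (r - s) y - y)"
        using Mb[of s] s by simp
      also have "\<dots> < M * (e / M)"
        using d(2)[of "r - s"] s False Mpos by (intro mult_strict_left_mono) (auto simp: dist_real_def)
      also have "\<dots> = e" using Mpos by simp
      finally show ?thesis .
    qed
  qed (rule d(1))
qed

lemma Tder:
  assumes Mb: "\<And>r x. 0 \<le> r \<Longrightarrow> r \<le> t \<Longrightarrow> norm (T r x) \<le> M * norm x" and M: "M \<ge> 1"
    and r: "r \<in> {0..t}" and y: "y \<in> dom_op A"
  shows "((\<lambda>s. T s y) has_vector_derivative T r (app_op A y)) (at r within {0..t})"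
  unfolding vder_iff tendsto_iff
proof (intro allI impI)
  fix e :: real assume e: "e > 0"
  have Mpos: "M > 0" using M by simp
  let ?Ay = "app_op A y"
  have "\<forall>\<^sub>F h in at_right 0. dist ((1 / h) *\<^sub>R (T h y - y)) ?Ay < e / (2 * M)"
    using Tgen[OF y] e Mpos unfolding tendsto_iff by simp
  then obtain b where b: "b > 0" "\<And>h. h > 0 \<Longrightarrow> h < b \<Longrightarrow> norm ((1 / h) *\<^sub>R (T h y - y) - ?Ay) < e / (2 * M)"
    unfolding eventually_at_right_field dist_norm by auto
  have "\<forall>\<^sub>F s in at r within {0..t}. dist (T s ?Ay) (T r ?Ay) < e / 2"
    using Tcont[OF Mb M r, of ?Ay] e unfolding tendsto_iff by (meson half_gt_zero)
  then obtain d2 where d2: "d2 > 0" "\<And>s. s \<in> {0..t} \<Longrightarrow> s \<noteq> r \<Longrightarrow> dist s r < d2 \<Longrightarrow> norm (T s ?Ay - T r ?Ay) < e / 2"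
    unfolding eventually_at dist_norm[of "T _ _"] by blast
  show "\<forall>\<^sub>F s in at r within {0..t}. dist ((T s y - T r y) /\<^sub>R (s - r)) (T r ?Ay) < e"
    unfolding eventually_at
  proof (intro exI[of _ "min b d2"] conjI ballI impI)
    show "min b d2 > 0" using b d2 by simp
    fix s assume s: "s \<in> {0..t}" "s \<noteq> r \<and> dist s r < min b d2"
    show "dist ((T s y - T r y) /\<^sub>R (s - r)) (T r ?Ay) < e"
    proof (cases "r < s")
      case True
      define h where "h = s - r"
      have h: "h > 0" "h < b" using True s by (auto simp: h_def dist_real_def)
      have "T s y = T r (T h y)" using Tsemi[of r h y] True r by (simp add: h_def)
      then have "(T s y - T r y) /\<^sub>R (s - r) = T r ((1 / h) *\<^sub>R (T h y - y))"
        using r by (simp add: Tdiff TscaleR h_def inverse_eq_divide)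
      then have "dist ((T s y - T r y) /\<^sub>R (s - r)) (T r ?Ay) = norm (T r ((1 / h) *\<^sub>R (T h y - y) - ?Ay))"
        using r by (simp add: dist_norm Tdiff)
      also have "\<dots> \<le> M * norm ((1 / h) *\<^sub>R (T h y - y) - ?Ay)" using Mb r by simp
      also have "\<dots> < M * (e / (2 * M))" using b(2)[OF h] Mpos by (intro mult_strict_left_mono) auto
      also have "\<dots> < e" using Mpos e by simp
      finally show ?thesis .
    next
      case False
      then have sr: "s < r" using s by auto
      define h where "h = r - s"
      have h: "h > 0" "h < b" using sr s by (auto simp: h_def dist_real_def)
      have "T r y = T s (T h y)" using Tsemi[of s h y] sr s by (simp add: h_def)
      have q: "(T s y - T r y) /\<^sub>R (s - r) = (1 / h) *\<^sub>R (T r y - T s y)"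
      proof -
        have "(T s y - T r y) /\<^sub>R (s - r) = (- (1 / h)) *\<^sub>R (- (T r y - T s y))"
          by (simp add: h_def inverse_eq_divide divide_minus_right[symmetric] minus_diff_eq)
        then show ?thesis by (metis minus_diff_eq scaleR_minus_left scaleR_minus_right minus_minus)
      qed
      also have "\<dots> = T s ((1 / h) *\<^sub>R (T h y - y))"
        using s \<open>T r y = T s (T h y)\<close> by (simp add: Tdiff TscaleR)
      finally have "dist ((T s y - T r y) /\<^sub>R (s - r)) (T r ?Ay)
          = norm (T s ((1 / h) *\<^sub>R (T h y - y) - ?Ay) + (T s ?Ay - T r ?Ay))"
        using s by (simp add: dist_norm Tdiff)
      also have "\<dots> \<le> norm (T s ((1 / h) *\<^sub>R (T h y - y) - ?Ay)) + norm (T s ?Ay - T r ?Ay)"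
        by (rule norm_triangle_ineq)
      also have "norm (T s ((1 / h) *\<^sub>R (T h y - y) - ?Ay)) \<le> M * norm ((1 / h) *\<^sub>R (T h y - y) - ?Ay)"
        using Mb s by simp
      also have "M * norm ((1 / h) *\<^sub>R (T h y - y) - ?Ay) < M * (e / (2 * M))"
        using b(2)[OF h] Mpos by (intro mult_strict_left_mono) auto
      also have "M * (e / (2 * M)) = e / 2" using Mpos by simp
      also have "norm (T s ?Ay - T r ?Ay) < e / 2" using d2(2)[of s] s by auto
      finally show ?thesis by simp
    qed
  qed
qed

lemma Tcont_rev:
  assumes Mb: "\<And>r x. 0 \<le> r \<Longrightarrow> r \<le> t \<Longrightarrow> norm (T r x) \<le> M * norm x" and M: "M \<ge> 1"
    and s: "s \<in> {0..t}"
  shows "((\<lambda>u. T (t - u) v) \<longlongrightarrow> T (t - s) v) (at s within {0..t})"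
proof -
  have c: "continuous_on {0..t} (\<lambda>r. T r v)" unfolding continuous_on_def using Tcont[OF Mb M] by blast
  have "continuous_on {0..t} (\<lambda>u. T (t - u) v)"
    by (rule continuous_on_compose2[OF c]) (auto intro!: continuous_intros)
  then show ?thesis using s unfolding continuous_on_def by blast
qed

lemma Tprod:
  assumes Mb: "\<And>r x. 0 \<le> r \<Longrightarrow> r \<le> t \<Longrightarrow> norm (T r x) \<le> M * norm x" and M: "M \<ge> 1"
    and s: "s \<in> {0..t}"
    and pd: "(p has_vector_derivative p') (at s within {0..t})" and pdom: "p s \<in> dom_op A"
  shows "((\<lambda>u. T (t - u) (p u)) has_vector_derivative (T (t - s) p' - T (t - s) (app_op A (p s)))) (at s within {0..t})"
proof -
  let ?g = "\<lambda>r. T r (p s)"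
  have gd: "(?g has_vector_derivative T (t - s) (app_op A (p s))) (at ((\<lambda>u. t - u) s) within (\<lambda>u. t - u) ` {0..t})"
  proof -
    have "(\<lambda>u. t - u) ` {0..t} = {0..t}"
    proof (rule set_eqI, rule iffI)
      fix x assume "x \<in> (\<lambda>u. t - u) ` {0..t}" then show "x \<in> {0..t}" by auto
    next
      fix x assume "x \<in> {0..t}" then have "t - x \<in> {0..t}" "x = t - (t - x)" by auto
      then show "x \<in> (\<lambda>u. t - u) ` {0..t}" by blast
    qed
    then show ?thesis using Tder[OF Mb M _ pdom, where r="t - s"] s by simp
  qed
  have fd: "((\<lambda>u. t - u) has_vector_derivative (-1)) (at s within {0..t})"
    by (auto intro!: derivative_eq_intros simp: has_real_derivative_iff_has_vector_derivative[symmetric])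
  have "((?g \<circ> (\<lambda>u. t - u)) has_vector_derivative (-1) *\<^sub>R T (t - s) (app_op A (p s))) (at s within {0..t})"
    by (rule vector_diff_chain_within[OF fd gd])
  then have part2: "((\<lambda>u. (T (t - u) (p s) - T (t - s) (p s)) /\<^sub>R (u - s)) \<longlongrightarrow> - T (t - s) (app_op A (p s))) (at s within {0..t})"
    unfolding vder_iff by (simp add: o_def)
  have W: "((\<lambda>u. (p u - p s) /\<^sub>R (u - s)) \<longlongrightarrow> p') (at s within {0..t})"
    using pd unfolding vder_iff .
  have ev: "\<forall>\<^sub>F u in at s within {0..t}. u \<in> {0..t}" by (simp add: eventually_at_filter)
  have part1a: "((\<lambda>u. T (t - u) ((p u - p s) /\<^sub>R (u - s) - p')) \<longlongrightarrow> 0) (at s within {0..t})"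
  proof (rule Lim_null_comparison)
    show "\<forall>\<^sub>F u in at s within {0..t}. norm (T (t - u) ((p u - p s) /\<^sub>R (u - s) - p')) \<le> M * norm ((p u - p s) /\<^sub>R (u - s) - p')"
      using ev by (rule eventually_mono) (auto intro: Mb)
    have "((\<lambda>u. (p u - p s) /\<^sub>R (u - s) - p') \<longlongrightarrow> 0) (at s within {0..t})"
      using W by (simp add: LIM_zero)
    then show "((\<lambda>u. M * norm ((p u - p s) /\<^sub>R (u - s) - p')) \<longlongrightarrow> 0) (at s within {0..t})"
      using tendsto_mult_right_zero tendsto_norm_zero by blast
  qed
  have part1: "((\<lambda>u. T (t - u) ((p u - p s) /\<^sub>R (u - s))) \<longlongrightarrow> T (t - s) p') (at s within {0..t})"
  proof -
    have lim: "((\<lambda>u. T (t - u) ((p u - p s) /\<^sub>R (u - s) - p') + T (t - u) p') \<longlongrightarrow> 0 + T (t - s) p') (at s within {0..t})"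
      by (intro tendsto_add part1a Tcont_rev[OF Mb M s])
    have e2: "\<forall>\<^sub>F u in at s within {0..t}. T (t - u) ((p u - p s) /\<^sub>R (u - s) - p') + T (t - u) p' = T (t - u) ((p u - p s) /\<^sub>R (u - s))"
      using ev
    proof (rule eventually_mono)
      fix u assume "u \<in> {0..t}"
      then have "t - u \<ge> 0" by simp
      then show "T (t - u) ((p u - p s) /\<^sub>R (u - s) - p') + T (t - u) p' = T (t - u) ((p u - p s) /\<^sub>R (u - s))"
        using Tdiff[of "t - u" "(p u - p s) /\<^sub>R (u - s)" p'] by simp
    qed
    show ?thesis using tendsto_cong[OF e2] lim by simp
  qed
  have sum: "((\<lambda>u. T (t - u) ((p u - p s) /\<^sub>R (u - s)) + (T (t - u) (p s) - T (t - s) (p s)) /\<^sub>R (u - s))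
      \<longlongrightarrow> T (t - s) p' + - T (t - s) (app_op A (p s))) (at s within {0..t})"
    by (intro tendsto_add part1 part2)
  have eq: "\<forall>\<^sub>F u in at s within {0..t}. T (t - u) ((p u - p s) /\<^sub>R (u - s)) + (T (t - u) (p s) - T (t - s) (p s)) /\<^sub>R (u - s)
      = (T (t - u) (p u) - T (t - s) (p s)) /\<^sub>R (u - s)"
    using ev
  proof (rule eventually_mono)
    fix u assume "u \<in> {0..t}"
    then have u: "t - u \<ge> 0" by simp
    have "T (t - u) ((p u - p s) /\<^sub>R (u - s)) = (T (t - u) (p u) - T (t - u) (p s)) /\<^sub>R (u - s)"
      using u Tdiff[of "t - u" "p u" "p s"] TscaleR[of "t - u" "inverse (u - s)" "p u - p s"] by simp
    then show "T (t - u) ((p u - p s) /\<^sub>R (u - s)) + (T (t - u) (p s) - T (t - s) (p s)) /\<^sub>R (u - s)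
      = (T (t - u) (p u) - T (t - s) (p s)) /\<^sub>R (u - s)"
      by (simp add: scaleR_right_distrib[symmetric])
  qed
  show ?thesis unfolding vder_iff
    using tendsto_cong[OF eq] sum by simp
qed

end


lemma resolvent_unique:
  assumes "is_resolvent A z R1" "is_resolvent A z R2"
  shows "R1 = R2"
proof
  fix x
  have "R2 x \<in> dom_op A" "z *\<^sub>C R2 x - app_op A (R2 x) = x" using assms(2) unfolding is_resolvent_def by auto
  then show "R1 x = R2 x" using assms(1) unfolding is_resolvent_def by metis
qed

lemma resolvent_is:
  assumes "z \<in> resolvent_set A"
  shows "is_resolvent A z (resolvent A z)"
proof -
  obtain R where R: "is_resolvent A z R" using assms unfolding resolvent_set_def by blast
  have "resolvent A z = R" unfolding resolvent_def using R resolvent_unique by (intro the_equality) blast+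
  then show ?thesis using R by simp
qed

locale mainl = sgp A T for A :: "'a::complex_banach op" and T +
  fixes B :: "'a op" and R :: "'a \<Rightarrow> 'a" and z0 :: complex and \<eta> Kd :: real
  assumes isR: "is_resolvent A z0 R"
    and B_closed: "closed_op B"
    and comm_def: "nested_comm_defined B A"
    and comm_inv: "\<forall>m. app_op (nested_comm B A m) ` dom_op A \<subseteq> dom_op A"
    and eta: "\<eta> \<ge> 0" and Kd: "Kd \<ge> 0"
    and Dbound: "\<And>m w. norm (app_op (nested_comm B A m) (R w)) \<le> Kd * \<eta> ^ m * norm w"
    and dense: "densely_defined A"
begin

abbreviation C where "C k \<equiv> nested_comm B A k"
definition D where "D k w = app_op (C k) (R w)"

lemma R_dom: "R x \<in> dom_op A" and R_inv: "z0 *\<^sub>C R x - app_op A (R x) = x"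
  using isR unfolding is_resolvent_def by auto

lemma R_left: "y \<in> dom_op A \<Longrightarrow> R (z0 *\<^sub>C y - app_op A y) = y"
  using isR unfolding is_resolvent_def by auto

lemma R_bclf: "bounded_clinear_fun R" using isR unfolding is_resolvent_def by auto

lemma R_bl: "bounded_linear R" using bclf_bounded_linear[OF R_bclf] .

lemma R_add: "R (u + v) = R u + R v" and R_scaleC: "R (c *\<^sub>C u) = c *\<^sub>C R u"
  using R_bclf unfolding bounded_clinear_fun_def by auto

lemma R_diff: "R (u - v) = R u - R v"
  using R_bl[THEN bounded_linear.linear] linear_diff by blast

lemma T_bclf: "r \<ge> 0 \<Longrightarrow> bounded_clinear_fun (T r)"
  using gen unfolding generates_semigroup_def by blast

lemma TscaleC: "r \<ge> 0 \<Longrightarrow> T r (c *\<^sub>C u) = c *\<^sub>C T r u"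
  using T_bclf unfolding bounded_clinear_fun_def by blast

lemma TR_comm:
  assumes r: "r \<ge> 0"
  shows "T r (R u) = R (T r u)"
proof -
  have y: "R u \<in> dom_op A" by (rule R_dom)
  have d: "T r (R u) \<in> dom_op A" "app_op A (T r (R u)) = T r (app_op A (R u))" using Tdom[OF y r] by auto
  have "z0 *\<^sub>C T r (R u) - app_op A (T r (R u)) = T r (z0 *\<^sub>C R u - app_op A (R u))"
    using d r by (simp add: TscaleC Tdiff)
  also have "\<dots> = T r u" by (simp add: R_inv)
  finally show ?thesis using R_left[OF d(1)] by simp
qed

lemma RA_comm:
  assumes w: "w \<in> dom_op A"
  shows "R (app_op A w) = app_op A (R w)"
proof -
  have "app_op A w = z0 *\<^sub>C w - (z0 *\<^sub>C w - app_op A w)" by simp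
  then have "R (app_op A w) = z0 *\<^sub>C R w - w" using R_left[OF w] by (metis R_diff R_scaleC)
  also have "\<dots> = app_op A (R w)" using R_inv[of w] by (metis diff_diff_eq2 diff_add_cancel add_diff_cancel_left')
  finally show ?thesis .
qed

lemma C_linear: "linear_op (C k)"
proof (induction k)
  case 0
  then show ?case using B_closed unfolding closed_op_def by simp
next
  case (Suc k)
  have "closable_op (comm_step (C k) A)" using comm_def unfolding nested_comm_defined_def by blast
  then show ?case using op_closure_linear comm_step_linear[OF Suc linA] by simp
qed

lemma C_dom:
  assumes "x \<in> dom_op A"
  shows "x \<in> dom_op (C k)" "app_op A x \<in> dom_op (C k)" "app_op (C k) x \<in> dom_op A"
  using assms comm_def unfolding nested_comm_defined_def comm_dom_hat_def by blast+

lemma C_Suc: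
  assumes x: "x \<in> dom_op A"
  shows "app_op (C (Suc k)) x = app_op (C k) (app_op A x) - app_op A (app_op (C k) x)"
proof -
  have cl: "closable_op (comm_step (C k) A)" using comm_def unfolding nested_comm_defined_def by blast
  have "x \<in> dom_op (comm_step (C k) A)"
    using x comm_def unfolding nested_comm_defined_def comm_step_def by auto
  then show ?thesis using op_closure_ext[OF cl] by (simp add: comm_step_def)
qed

lemma D_bl: "bounded_linear (D k)"
proof (rule bounded_linear_intro)
  show "D k (u + v) = D k u + D k v" for u v
    unfolding D_def R_add using linop_add[OF C_linear C_dom(1)[OF R_dom] C_dom(1)[OF R_dom]] by blast
  show "D k (c *\<^sub>R u) = c *\<^sub>R D k u" for c u
  proof -
    have "R (c *\<^sub>R u) = c *\<^sub>R R u" using R_bl[THEN bounded_linear.linear] linear_scale by blast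
    then show ?thesis unfolding D_def using linop_scaleR[OF C_linear C_dom(1)[OF R_dom]] by simp
  qed
  show "norm (D k u) \<le> norm u * (Kd * \<eta> ^ k)" for u
    using Dbound[of k u] unfolding D_def by (simp add: mult.commute)
qed

lemma D_norm: "norm (D k u) \<le> Kd * \<eta> ^ k * norm u"
  using Dbound unfolding D_def by simp

lemma D_R: "x \<in> dom_op A \<Longrightarrow> app_op (C k) x = D k (z0 *\<^sub>C x - app_op A x)"
  unfolding D_def using R_left by simp

end


lemma tele:
  fixes G :: "nat \<Rightarrow> 'b::real_vector" and t s :: real
  shows "(\<Sum>k\<le>m. ((t - s) ^ k / fact k) *\<^sub>R G (Suc k) + (- (real k * (t - s) ^ (k - 1) / fact k)) *\<^sub>R G k)
    = ((t - s) ^ m / fact m) *\<^sub>R G (Suc m)"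
proof (induction m)
  case 0
  then show ?case by simp
next
  case (Suc m)
  have "- (real (Suc m) * (t - s) ^ (Suc m - 1) / fact (Suc m)) = - ((t - s) ^ m / fact m)"
    by (simp add: fact_Suc del: of_nat_Suc)
  then show ?case using Suc by (simp add: algebra_simps del: of_nat_Suc)
qed

lemma cder:
  fixes t :: real
  shows "((\<lambda>s. (t - s) ^ k / fact k) has_real_derivative (- (real k * (t - s) ^ (k - 1) / fact k))) (at s within S)"
  by (auto intro!: derivative_eq_intros)

context mainl
begin

lemma main_dense:
  assumes t: "t > 0" and w: "w \<in> dom_op A"
  shows "D 0 (T t w) = T t (\<Sum>m. (t ^ m / fact m) *\<^sub>R D m w)"
proof -
  obtain M where M: "M \<ge> 1" and Mb0: "\<forall>r. 0 \<le> r \<and> r \<le> t \<longrightarrow> (\<forall>x. norm (T r x) \<le> M * norm x)"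
    using local_bound[of t] t by auto
  have Mb: "\<And>r x. 0 \<le> r \<Longrightarrow> r \<le> t \<Longrightarrow> norm (T r x) \<le> M * norm x" using Mb0 by blast
  define x where "x = R w"
  have Tx: "T s x = R (T s w)" if "s \<ge> 0" for s using TR_comm[OF that] x_def by simp
  have Txd: "T s x \<in> dom_op A" if "s \<ge> 0" for s using Tx[OF that] R_dom by simp
  define g where "g k s = T (t - s) (D k (T s w))" for k s
  have DC: "D k (T s w) = app_op (C k) (T s x)" if "s \<ge> 0" for k s
    using Tx[OF that] by (simp add: D_def)
  have pder: "((\<lambda>s. D k (T s w)) has_vector_derivative app_op (C k) (app_op A (T s x))) (at s within {0..t})"
    if s: "s \<in> {0..t}" for k s
  proof -
    have "((\<lambda>s. D k (T s w)) has_vector_derivative D k (T s (app_op A w))) (at s within {0..t})"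
      by (rule bounded_linear.has_vector_derivative[OF D_bl Tder[OF Mb M s w]])
    moreover have "D k (T s (app_op A w)) = app_op (C k) (app_op A (T s x))"
    proof -
      have "D k (T s (app_op A w)) = app_op (C k) (T s (R (app_op A w)))"
        using s TR_comm[of s] by (simp add: D_def)
      also have "\<dots> = app_op (C k) (T s (app_op A x))" using RA_comm[OF w] x_def by simp
      also have "\<dots> = app_op (C k) (app_op A (T s x))" using Tdom[of x s] R_dom x_def s by simp
      finally show ?thesis .
    qed
    ultimately show ?thesis by simp
  qed
  have gder: "(g k has_vector_derivative g (Suc k) s) (at s within {0..t})" if s: "s \<in> {0..t}" for k s
  proof -
    have s0: "s \<ge> 0" "t - s \<ge> 0" using s by auto
    have pd: "D k (T s w) \<in> dom_op A" using DC[OF s0(1)] C_dom(3)[OF Txd[OF s0(1)]] by simp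
    have "(g k has_vector_derivative (T (t - s) (app_op (C k) (app_op A (T s x))) - T (t - s) (app_op A (D k (T s w))))) (at s within {0..t})"
      unfolding g_def by (rule Tprod[OF Mb M s pder[OF s] pd])
    moreover have "T (t - s) (app_op (C k) (app_op A (T s x))) - T (t - s) (app_op A (D k (T s w))) = g (Suc k) s"
      unfolding g_def using DC[OF s0(1), of k] DC[OF s0(1), of "Suc k"] C_Suc[OF Txd[OF s0(1)], of k] s0
      by (simp add: Tdiff)
    ultimately show ?thesis by simp
  qed
  define F where "F m s = (\<Sum>k\<le>m. ((t - s) ^ k / fact k) *\<^sub>R g k s)" for m s
  have Fder: "(F m has_vector_derivative ((t - s) ^ m / fact m) *\<^sub>R g (Suc m) s) (at s within {0..t})"
    if s: "s \<in> {0..t}" for m s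
  proof -
    have "(F m has_vector_derivative (\<Sum>k\<le>m. ((t - s) ^ k / fact k) *\<^sub>R g (Suc k) s + (- (real k * (t - s) ^ (k - 1) / fact k)) *\<^sub>R g k s)) (at s within {0..t})"
      unfolding F_def[abs_def]
      by (intro has_vector_derivative_sum has_vector_derivative_scaleR cder gder s)
    then show ?thesis using tele[of t s "\<lambda>k. g k s" m] by simp
  qed
  define \<beta> where "\<beta> m = (t * \<eta>) ^ m / fact m * (M * (Kd * \<eta> * (M * norm w)))" for m
  have bnd: "norm (((t - s) ^ m / fact m) *\<^sub>R g (Suc m) s) \<le> \<beta> m" if s: "s \<in> {0..t}" for m s
  proof -
    have s0: "s \<ge> 0" "t - s \<ge> 0" "s \<le> t" "t - s \<le> t" using s by auto
    have "norm (g (Suc m) s) \<le> M * norm (D (Suc m) (T s w))" unfolding g_def using Mb s0 by simp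
    also have "\<dots> \<le> M * (Kd * \<eta> ^ Suc m * norm (T s w))" using M by (intro mult_left_mono D_norm) auto
    also have "\<dots> \<le> M * (Kd * \<eta> ^ Suc m * (M * norm w))"
      using M Kd eta Mb[OF s0(1) s0(3)] by (intro mult_left_mono) auto
    finally have ng: "norm (g (Suc m) s) \<le> M * (Kd * \<eta> ^ Suc m * (M * norm w))" .
    have c: "0 \<le> (t - s) ^ m / fact m" "(t - s) ^ m / fact m \<le> t ^ m / fact m"
      using s0 by (auto intro!: divide_right_mono power_mono)
    have "norm (((t - s) ^ m / fact m) *\<^sub>R g (Suc m) s) = \<bar>(t - s) ^ m / fact m\<bar> * norm (g (Suc m) s)"
      by (rule norm_scaleR)
    also have "\<dots> = (t - s) ^ m / fact m * norm (g (Suc m) s)" by (simp only: abs_of_nonneg[OF c(1)])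
    also have "\<dots> \<le> t ^ m / fact m * (M * (Kd * \<eta> ^ Suc m * (M * norm w)))"
      using c ng by (intro mult_mono) auto
    also have "\<dots> = \<beta> m" unfolding \<beta>_def by (simp add: power_mult_distrib field_simps)
    finally show ?thesis .
  qed
  have MVT: "norm (F m t - F m 0) \<le> t * (3 * \<beta> m)" for m
  proof -
    have z: "(0::real) \<in> {0..t}" using t by simp
    have b0: "\<beta> m \<ge> 0" using order_trans[OF norm_ge_zero bnd[OF z]] .
    have "norm (F m t - F m 0 - (t - 0) *\<^sub>R (((t - 0) ^ m / fact m) *\<^sub>R g (Suc m) 0)) \<le> norm (t - 0) * (2 * \<beta> m)"
    proof (rule vector_differentiable_bound_linearization[where S="{0..t}"])
      show "\<And>s. s \<in> {0..t} \<Longrightarrow> (F m has_vector_derivative ((t - s) ^ m / fact m) *\<^sub>R g (Suc m) s) (at s within {0..t})"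
        by (rule Fder)
      show "closed_segment 0 t \<subseteq> {0..t}" using t closed_segment_eq_real_ivl1[of 0 t] by simp
      show "0 \<in> {0..t}" using t by simp
      fix s assume "s \<in> {0..t}"
      then show "norm (((t - s) ^ m / fact m) *\<^sub>R g (Suc m) s - ((t - 0) ^ m / fact m) *\<^sub>R g (Suc m) 0) \<le> 2 * \<beta> m"
        using bnd[of s m] bnd[of 0 m] t by (smt (verit) atLeastAtMost_iff norm_triangle_ineq4)
    qed
    moreover have "norm ((t - 0) *\<^sub>R (((t - 0) ^ m / fact m) *\<^sub>R g (Suc m) 0)) \<le> t * \<beta> m"
      using mult_left_mono[OF bnd[OF z, of m], of t] t by (simp add: abs_of_pos mult.assoc)
    moreover have "norm (F m t - F m 0) \<le> norm ((t - 0) *\<^sub>R (((t - 0) ^ m / fact m) *\<^sub>R g (Suc m) 0))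
       + norm (F m t - F m 0 - (t - 0) *\<^sub>R (((t - 0) ^ m / fact m) *\<^sub>R g (Suc m) 0))"
      by (rule norm_triangle_sub)
    moreover have "norm (t - 0) = t" using t by simp
    ultimately show ?thesis by (simp add: algebra_simps)
  qed
  have Ft: "F m t = D 0 (T t w)" for m
  proof -
    have "F m t = (\<Sum>k\<le>m. (if k = 0 then g 0 t else 0))"
      unfolding F_def by (intro sum.cong) auto
    also have "\<dots> = g 0 t" by simp
    finally show ?thesis by (simp add: g_def T0)
  qed
  define P where "P m = (\<Sum>k\<le>m. (t ^ k / fact k) *\<^sub>R D k w)" for m
  have F0: "F m 0 = T t (P m)" for m
  proof -
    have lin: "linear (T t)" using Tbl t by (simp add: bounded_linear.linear)
    have "F m 0 = (\<Sum>k\<le>m. (t ^ k / fact k) *\<^sub>R T t (D k w))" unfolding F_def g_def by (simp add: T0)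
    also have "\<dots> = T t (P m)" unfolding P_def by (simp add: linear_sum[OF lin] linear_scale[OF lin])
    finally show ?thesis .
  qed
  have sumD: "summable (\<lambda>m. (t ^ m / fact m) *\<^sub>R D m w)"
  proof (rule summable_comparison_test')
    show "summable (\<lambda>m. inverse (fact m) * (t * \<eta>) ^ m * (Kd * norm w))"
      by (intro summable_mult2 summable_exp)
    fix m :: nat
    have "norm ((t ^ m / fact m) *\<^sub>R D m w) = t ^ m / fact m * norm (D m w)" using t by simp
    also have "\<dots> \<le> t ^ m / fact m * (Kd * \<eta> ^ m * norm w)" using t by (intro mult_left_mono D_norm) auto
    also have "\<dots> = inverse (fact m) * (t * \<eta>) ^ m * (Kd * norm w)" by (simp add: power_mult_distrib field_simps)
    finally show "norm ((t ^ m / fact m) *\<^sub>R D m w) \<le> inverse (fact m) * (t * \<eta>) ^ m * (Kd * norm w)" .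
  qed
  have lim1: "(\<lambda>m. T t (P m)) \<longlonglongrightarrow> T t (\<Sum>m. (t ^ m / fact m) *\<^sub>R D m w)"
  proof -
    have bl: "bounded_linear (T t)" using Tbl t by simp
    show ?thesis unfolding P_def by (rule bounded_linear.tendsto[OF bl summable_LIMSEQ'[OF sumD]])
  qed
  have \<beta>0: "\<beta> \<longlonglongrightarrow> 0"
  proof -
    have "(\<lambda>m. inverse (fact m) * (t * \<eta>) ^ m) \<longlonglongrightarrow> 0" by (rule summable_LIMSEQ_zero[OF summable_exp])
    then have "(\<lambda>m. inverse (fact m) * (t * \<eta>) ^ m * (M * (Kd * \<eta> * (M * norm w)))) \<longlonglongrightarrow> 0"
      by (rule tendsto_mult_left_zero)
    then show ?thesis unfolding \<beta>_def[abs_def] by (simp add: field_simps)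
  qed
  have lim2: "(\<lambda>m. T t (P m)) \<longlonglongrightarrow> D 0 (T t w)"
  proof -
    have "(\<lambda>m. T t (P m) - D 0 (T t w)) \<longlonglongrightarrow> 0"
    proof (rule Lim_null_comparison)
      show "\<forall>\<^sub>F m in sequentially. norm (T t (P m) - D 0 (T t w)) \<le> t * (3 * \<beta> m)"
        using MVT by (simp add: Ft F0 norm_minus_commute)
      show "(\<lambda>m. t * (3 * \<beta> m)) \<longlonglongrightarrow> 0"
        using \<beta>0 by (intro tendsto_mult_right_zero)
    qed
    then show ?thesis by (simp add: LIM_zero_iff)
  qed
  show ?thesis using LIMSEQ_unique[OF lim2 lim1] .
qed

end


context mainl
begin

lemma sumD:
  assumes t: "t \<ge> 0"
  shows "summable (\<lambda>m. (t ^ m / fact m) *\<^sub>R D m w)"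
    and "summable (\<lambda>m. norm ((t ^ m / fact m) *\<^sub>R D m w))"
    and "\<And>m. norm ((t ^ m / fact m) *\<^sub>R D m w) \<le> inverse (fact m) * (t * \<eta>) ^ m * Kd * norm w"
proof -
  show b: "norm ((t ^ m / fact m) *\<^sub>R D m w) \<le> inverse (fact m) * (t * \<eta>) ^ m * Kd * norm w" for m
  proof -
    have "norm ((t ^ m / fact m) *\<^sub>R D m w) = t ^ m / fact m * norm (D m w)" using t by simp
    also have "\<dots> \<le> t ^ m / fact m * (Kd * \<eta> ^ m * norm w)" using t by (intro mult_left_mono D_norm) auto
    also have "\<dots> = inverse (fact m) * (t * \<eta>) ^ m * Kd * norm w" by (simp add: power_mult_distrib field_simps)
    finally show ?thesis .
  qed
  have s: "summable (\<lambda>m. inverse (fact m) * (t * \<eta>) ^ m * Kd * norm w)"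
    by (intro summable_mult2 summable_exp)
  show "summable (\<lambda>m. (t ^ m / fact m) *\<^sub>R D m w)"
    by (rule summable_comparison_test'[OF s b])
  show "summable (\<lambda>m. norm ((t ^ m / fact m) *\<^sub>R D m w))"
    by (rule summable_comparison_test'[OF s]) (use b in simp)
qed

lemma Phi_bound:
  assumes t: "t \<ge> 0"
  shows "norm (\<Sum>m. (t ^ m / fact m) *\<^sub>R D m w) \<le> (\<Sum>m. inverse (fact m) * (t * \<eta>) ^ m * Kd) * norm w"
proof -
  have "norm (\<Sum>m. (t ^ m / fact m) *\<^sub>R D m w) \<le> (\<Sum>m. norm ((t ^ m / fact m) *\<^sub>R D m w))"
    by (rule summable_norm[OF sumD(2)[OF t]])
  also have "\<dots> \<le> (\<Sum>m. inverse (fact m) * (t * \<eta>) ^ m * Kd * norm w)"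
    by (intro suminf_le sumD(2)[OF t] sumD(3)[OF t] summable_mult2 summable_exp)
  also have "\<dots> = (\<Sum>m. inverse (fact m) * (t * \<eta>) ^ m * Kd) * norm w"
    by (intro suminf_mult2[symmetric] summable_mult2 summable_exp)
  finally show ?thesis .
qed

lemma Phi_diff:
  assumes t: "t \<ge> 0"
  shows "(\<Sum>m. (t ^ m / fact m) *\<^sub>R D m u) - (\<Sum>m. (t ^ m / fact m) *\<^sub>R D m v) = (\<Sum>m. (t ^ m / fact m) *\<^sub>R D m (u - v))"
proof -
  have "(\<Sum>m. (t ^ m / fact m) *\<^sub>R D m u) - (\<Sum>m. (t ^ m / fact m) *\<^sub>R D m v)
     = (\<Sum>m. (t ^ m / fact m) *\<^sub>R D m u - (t ^ m / fact m) *\<^sub>R D m v)"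
    by (rule suminf_diff[OF sumD(1)[OF t] sumD(1)[OF t]])
  also have "\<dots> = (\<Sum>m. (t ^ m / fact m) *\<^sub>R D m (u - v))"
    using D_bl[THEN bounded_linear.linear] by (simp add: linear_diff scaleR_diff_right)
  finally show ?thesis .
qed

lemma main_all:
  assumes t: "t > 0" and x: "x \<in> dom_op A"
  shows "summable (\<lambda>m. (t ^ m / fact m) *\<^sub>R app_op (C m) x) \<and>
     app_op B (T t x) = T t (\<Sum>m. (t ^ m / fact m) *\<^sub>R app_op (C m) x)"
proof -
  define w0 where "w0 = z0 *\<^sub>C x - app_op A x"
  have xR: "x = R w0" using R_left[OF x] w0_def by simp
  have Cx: "app_op (C m) x = D m w0" for m using D_R[OF x] w0_def by simp
  have summ: "summable (\<lambda>m. (t ^ m / fact m) *\<^sub>R app_op (C m) x)" using sumD(1)[of t w0] t by (simp add: Cx)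
  let ?\<Phi> = "\<lambda>w. (\<Sum>m. (t ^ m / fact m) *\<^sub>R D m w)"
  let ?K = "(\<Sum>m. inverse (fact m) * (t * \<eta>) ^ m * Kd)"
  have "w0 \<in> closure (dom_op A)" using dense unfolding densely_defined_def by simp
  then obtain wn where wn: "\<And>n. wn n \<in> dom_op A" "wn \<longlonglongrightarrow> w0" unfolding closure_sequential by blast
  have blT: "bounded_linear (T t)" using Tbl t by simp
  have l1: "(\<lambda>n. D 0 (T t (wn n))) \<longlonglongrightarrow> D 0 (T t w0)"
    by (rule bounded_linear.tendsto[OF D_bl bounded_linear.tendsto[OF blT wn(2)]])
  have "(\<lambda>n. ?\<Phi> (wn n) - ?\<Phi> w0) \<longlonglongrightarrow> 0"
  proof (rule Lim_null_comparison)
    show "\<forall>\<^sub>F n in sequentially. norm (?\<Phi> (wn n) - ?\<Phi> w0) \<le> ?K * norm (wn n - w0)"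
      using Phi_bound[of t] Phi_diff[of t] t by simp
    have "(\<lambda>n. wn n - w0) \<longlonglongrightarrow> 0" using wn(2) by (simp add: LIM_zero)
    then show "(\<lambda>n. ?K * norm (wn n - w0)) \<longlonglongrightarrow> 0"
      using tendsto_mult_right_zero tendsto_norm_zero by blast
  qed
  then have "(\<lambda>n. ?\<Phi> (wn n)) \<longlonglongrightarrow> ?\<Phi> w0" by (simp add: LIM_zero_iff)
  then have l2: "(\<lambda>n. T t (?\<Phi> (wn n))) \<longlonglongrightarrow> T t (?\<Phi> w0)"
    by (rule bounded_linear.tendsto[OF blT])
  have "(\<lambda>n. D 0 (T t (wn n))) = (\<lambda>n. T t (?\<Phi> (wn n)))"
    using main_dense[OF t wn(1)] by simp
  then have eq: "D 0 (T t w0) = T t (?\<Phi> w0)" using LIMSEQ_unique[OF l1] l2 by simp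
  have "D 0 (T t w0) = app_op B (T t x)" unfolding D_def using TR_comm[of t w0] t xR by simp
  with eq have "app_op B (T t x) = T t (\<Sum>m. (t ^ m / fact m) *\<^sub>R app_op (C m) x)" by (simp add: Cx)
  with summ show ?thesis by blast
qed

end

theorem lemma1:
  fixes A B :: "'a::complex_banach op" and T :: "real \<Rightarrow> 'a \<Rightarrow> 'a"
    and a \<phi> K \<eta> K1 :: real
  assumes sect: "sectorial A a \<phi> K"
    and gen: "generates_semigroup A T"
    and B_closed: "closed_op B"
    and domAB: "dom_op A \<subseteq> dom_op B"
    and B_inv: "app_op B ` dom_op A \<subseteq> dom_op A"
    and comm_def: "nested_comm_defined B A"
    and comm_inv: "\<forall>m. app_op (nested_comm B A m) ` dom_op A \<subseteq> dom_op A"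
    and eta: "\<eta> > 0" and K1: "K1 > 0"
    and bound: "\<forall>m. \<forall>z\<in>sector a \<phi>. \<forall>x.
        norm (app_op (nested_comm B A m) (resolvent A z x))
          \<le> K1 * \<eta> ^ m / cmod (z - complex_of_real a) * norm x"
  shows "\<forall>t>0. \<forall>x\<in>dom_op A.
     summable (\<lambda>m. (t ^ m / fact m) *\<^sub>R app_op (nested_comm B A m) x) \<and>
     T t x \<in> dom_op B \<and>
     app_op B (T t x) = T t (\<Sum>m. (t ^ m / fact m) *\<^sub>R app_op (nested_comm B A m) x)"
proof (intro allI impI ballI)
  fix t :: real and x assume t: "t > 0" and x: "x \<in> dom_op A"
  define z0 where "z0 = complex_of_real (a + 1)"
  have z0a: "z0 - complex_of_real a = 1" unfolding z0_def by simp
  have "pi / 2 < \<phi>" using sect unfolding sectorial_def by blast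
  then have phi: "\<phi> > 0" using pi_gt_zero by linarith
  have zs: "z0 \<in> sector a \<phi>" unfolding sector_def using z0a phi by auto
  then have isR: "is_resolvent A z0 (resolvent A z0)"
    using sect resolvent_is unfolding sectorial_def by blast
  have linA: "linear_op A" using sect unfolding sectorial_def closed_op_def by blast
  have dense: "densely_defined A" using sect unfolding sectorial_def by blast
  interpret mainl A T B "resolvent A z0" z0 \<eta> K1
  proof
    show "generates_semigroup A T" by (rule gen)
    show "linear_op A" by (rule linA)
    show "is_resolvent A z0 (resolvent A z0)" by (rule isR)
    show "closed_op B" by (rule B_closed)
    show "nested_comm_defined B A" by (rule comm_def)
    show "\<forall>m. app_op (nested_comm B A m) ` dom_op A \<subseteq> dom_op A" by (rule comm_inv)
    show "\<eta> \<ge> 0" using eta by simp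
    show "K1 \<ge> 0" using K1 by simp
    show "norm (app_op (nested_comm B A m) (resolvent A z0 w)) \<le> K1 * \<eta> ^ m * norm w" for m w
      using bound zs z0a by force
    show "densely_defined A" by (rule dense)
  qed
  have "T t x \<in> dom_op A" using Tdom[OF x] t by simp
  then have "T t x \<in> dom_op B" using domAB by blast
  then show "summable (\<lambda>m. (t ^ m / fact m) *\<^sub>R app_op (nested_comm B A m) x) \<and>
     T t x \<in> dom_op B \<and>
     app_op B (T t x) = T t (\<Sum>m. (t ^ m / fact m) *\<^sub>R app_op (nested_comm B A m) x)"
    using main_all[OF t x] by blast
qed


end
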